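(* Let $(\mathbb{S}^2,d_H)$ be the doubled hexagon described in the context. The minimum of the lengths of the nonconstant restricted closed geodesics of $(\mathbb{S}^2,d_H)$ equals $4$. This minimum is attained, for instance, by the restricted closed geodesic whose projection $p\circ\gamma$ traverses the vertical segment from $-i$ to $i$ in $H$ (a segment orthogonal to two opposite edges of $H$) once in each copy of $H$, i.e. back and forth.
   Context: Identify $\mathbb{R}^2$ with $\mathbb{C}$. Let $H$ be the closed regular hexagon with vertices $\frac{2}{\sqrt3}e^{ik\pi/3}$, $k=0,\dots,5$ (so the distance from the center to each edge is $1$). For $k=0,1,2$ let $L_k=\{te^{i(\pi/6+2k\pi/3)}: t\in\mathbb{R}\}$, $\overline{L_k}=\{te^{i(\pi/6+2k\pi/3)}: t\in[0,1]\}$, $\pi_k$ the orthogonal projection of $\mathbb{C}$ onto $L_k$, and for a set $A\subset H$ let $\overline{\pi_k}(A)=\pi_k(A)\cap\overline{L_k}$; $|\cdot|$ denotes one-dimensional Lebesgue measure on $L_k$. For a straight segment $\sigma\subset H$ set $\ell(\sigma)=\sum_{k=0}^{2}|\overline{\pi_k}(\sigma)|$ (this is the length of $\sigma$ for the pseudo-metric $d_H$ on $H$ defined as the infimum of $\sum_k|\overline{\pi_k}(\gamma([0,1]))|$ over piecewise smooth curves $\gamma$ joining two points). Let $\mathbb{S}^2$ be obtained from two copies $H_1,H_2$ of $H$ by identifying corresponding boundary points, and let $p:\mathbb{S}^2\to H$ be the canonical projection; let $V$ be the set of the six vertices. A restricted closed geodesic is a nonconstant closed curve $\gamma$ in $\mathbb{S}^2\setminus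 V$ made of finitely many straight segments $\sigma_1,\dots,\sigma_N$ (cyclically ordered), each contained in one copy $H_j$ and joining two points in the interiors of edges, consecutive segments lying in different copies (so $N$ is even), such that $p\circ\gamma$ is a periodic billiard trajectory in $H$: at each edge point the direction of the next segment is the mirror reflection across that edge of the direction of the previous segment (angle of incidence equals angle of reflection). Its length is $\sum_{j=1}^N\ell(p(\sigma_j))$. *)

theory Defs
  imports "HOL-Analysis.Analysis"
begin

text \<open>The hexagon H: vertices hex_vert k = (2/sqrt 3) e^{i k pi/3}; edge k joins
  hex_vert k and hex_vert (k+1); its outward unit normal is e^{i(pi/6 + k pi/3)}.\<close>

definition hex_vert :: "nat \<Rightarrow> complex" where
  "hex_vert k = complex_of_real (2 / sqrt 3) * cis (real k * pi / 3)"

definition hex_normal :: "nat \<Rightarrow> complex" where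
  "hex_normal k = cis (pi / 6 + real k * pi / 3)"

definition edge_interior :: "nat \<Rightarrow> complex set" where
  "edge_interior k = open_segment (hex_vert k) (hex_vert (Suc k))"

definition edge_reflect :: "nat \<Rightarrow> complex \<Rightarrow> complex" where
  "edge_reflect k d = d - complex_of_real (2 * Re (d * cnj (hex_normal k))) * hex_normal k"

definition L_dir :: "nat \<Rightarrow> complex" where
  "L_dir k = cis (pi / 6 + 2 * real k * pi / 3)"

text \<open>|pi_k-bar(A)|: Lebesgue measure of pi_k(A) \<inter> L_k-bar, with L_k parametrised
  isometrically by t \<mapsto> t * L_dir k (so L_k-bar corresponds to t \<in> [0,1]).\<close>
definition proj_len :: "nat \<Rightarrow> complex set \<Rightarrow> real" where
  "proj_len k A = measure lborel {t::real. t \<in> {0..1} \<and> (\<exists>z\<in>A. Re (z * cnj (L_dir k)) = t)}"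

definition seg_len :: "complex \<Rightarrow> complex \<Rightarrow> real" where
  "seg_len a b = (\<Sum>k<3. proj_len k (closed_segment a b))"

text \<open>A restricted closed geodesic is encoded by the cyclic list xs of its break
  points x_0,...,x_{N-1} (points in interiors of edges); segment j joins x_j and
  x_{(j+1) mod N}. Consecutive segments lie in different copies of H, which is possible
  exactly when N is even (the copies alternate).\<close>
definition restricted_closed_geodesic :: "complex list \<Rightarrow> bool" where
  "restricted_closed_geodesic xs \<longleftrightarrow>
     (let N = length xs in
       N \<noteq> 0 \<and> even N \<and>
       (\<forall>j<N. \<exists>k<6. xs ! j \<in> edge_interior k) \<and>
       (\<forall>j<N. xs ! j \<noteq> xs ! ((j + 1) mod N)) \<and>
       (\<forall>j<N. \<forall>k<6. xs ! ((j + 1) mod N) \<in> edge_interior k \<longrightarrow>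
          (\<exists>c>0. xs ! ((j + 2) mod N) - xs ! ((j + 1) mod N) =
                  complex_of_real c * edge_reflect k (xs ! ((j + 1) mod N) - xs ! j))))"

definition geodesic_length :: "complex list \<Rightarrow> real" where
  "geodesic_length xs = (\<Sum>j<length xs. seg_len (xs ! j) (xs ! ((j + 1) mod length xs)))"

end

theory Submission
  imports Defs
begin


definition gc :: "real \<Rightarrow> real" where "gc t = max 0 (min 1 t)"

lemma linear_ReF: "linear (\<lambda>z::complex. Re (z * c))"
  by (rule linearI) (auto simp: algebra_simps scaleR_conv_of_real)

lemma proj_len_seg:
  "proj_len k (closed_segment a b) =
     \<bar>gc (Re (b * cnj (L_dir k))) - gc (Re (a * cnj (L_dir k)))\<bar>"
proof -
  define F where "F = (\<lambda>z::complex. Re (z * cnj (L_dir k)))"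
  have lin: "linear F" unfolding F_def by (rule linear_ReF)
  have "{t::real. t \<in> {0..1} \<and> (\<exists>z\<in>closed_segment a b. Re (z * cnj (L_dir k)) = t)}
        = {0..1} \<inter> F ` closed_segment a b" unfolding F_def by auto
  also have "F ` closed_segment a b = closed_segment (F a) (F b)"
    using closed_segment_linear_image[OF lin] by simp
  also have "\<dots> = {min (F a) (F b) .. max (F a) (F b)}"
    by (auto simp: closed_segment_eq_real_ivl)
  also have "{0..1} \<inter> {min (F a) (F b) .. max (F a) (F b)} =
      {max 0 (min (F a) (F b)) .. min 1 (max (F a) (F b))}" by auto
  finally have eq: "{t::real. t \<in> {0..1} \<and> (\<exists>z\<in>closed_segment a b. Re (z * cnj (L_dir k)) = t)}
      = {max 0 (min (F a) (F b)) .. min 1 (max (F a) (F b))}" .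
  have m: "measure lborel {max 0 (min p q) .. min 1 (max p q)} = \<bar>gc q - gc p\<bar>" for p q :: real
    by (cases "max 0 (min p q) \<le> min 1 (max p q)")
       (auto simp: gc_def max_def min_def split: if_splits)
  show ?thesis
    unfolding proj_len_def eq m F_def ..
qed



abbreviation r3 where "r3 \<equiv> sqrt (3::real)"

lemma r3sq: "r3 * r3 = 3" by simp
lemma r3pos: "r3 > 0" by simp

definition w6 :: complex where "w6 = Complex (1/2) (r3/2)"

lemma cis60: "cis (pi/3) = w6"
  by (simp add: w6_def complex_eq_iff cos_60 sin_60)
lemma cis30: "cis (pi/6) = Complex (r3/2) (1/2)"
  by (simp add: complex_eq_iff cos_30 sin_30)

lemma w6_2: "w6^2 = Complex (-1/2) (r3/2)"
proof -
  have "w6^2 = w6*w6" by (simp add: power2_eq_square)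
  also have "\<dots> = Complex (-1/2) (r3/2)" by (simp add: w6_def complex_eq_iff)
  finally show ?thesis .
qed
lemma w6_3: "w6^3 = -1"
proof -
  have "w6^3 = w6^2 * w6" by (simp add: power_numeral_reduce)
  also have "\<dots> = Complex (-1/2) (r3/2) * w6" by (simp only: w6_2)
  also have "\<dots> = -1" by (simp add: complex_eq_iff w6_def)
  finally show ?thesis .
qed
lemma w6_4: "w6^4 = - w6"
  using w6_3 by (metis (no_types, lifting) mult_minus1 numeral_plus_one power_add power_one_right semiring_norm(2) semiring_norm(8))
lemma w6_5: "w6^5 = - (w6^2)"
proof - have "w6^5 = w6^3 * w6^2" by (simp flip: power_add) thus ?thesis by (simp add: w6_3) qed
lemma w6_6: "w6^6 = 1"
proof - have "w6^6 = w6^3 * w6^3" by (simp flip: power_add) thus ?thesis by (simp add: w6_3) qed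

lemma cis_k: "cis (real k * pi / 3) = w6 ^ k"
proof -
  have "cis (pi/3) ^ k = cis (real k * (pi / 3))" by (rule Complex.DeMoivre)
  thus ?thesis by (simp add: cis60)
qed

lemma hv: "hex_vert k = complex_of_real (2/r3) * w6 ^ k"
  by (simp add: hex_vert_def cis_k)

lemma hn: "hex_normal k = Complex (r3/2) (1/2) * w6 ^ k"
  unfolding hex_normal_def by (simp add: cis_k flip: cis30 cis_mult add_divide_distrib)

lemma Ld: "L_dir k = Complex (r3/2) (1/2) * w6 ^ (2*k)"
proof -
  have "pi / 6 + 2 * real k * pi / 3 = pi/6 + real (2*k) * pi / 3" by simp
  thus ?thesis unfolding L_dir_def by (simp only: flip: cis30 cis_k cis_mult)
qed



definition XX :: "complex \<Rightarrow> real" where "XX z = r3 * Re z"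
definition YY :: "complex \<Rightarrow> real" where "YY z = Im z"

definition EE :: "nat \<Rightarrow> real \<Rightarrow> real \<Rightarrow> bool" where
 "EE k X Y \<longleftrightarrow> (k=0 \<and> X+Y=2 \<and> 0<Y \<and> Y<1) \<or> (k=1 \<and> Y=1 \<and> -1<X \<and> X<1) \<or>
    (k=2 \<and> Y-X=2 \<and> 0<Y \<and> Y<1) \<or> (k=3 \<and> X+Y=-2 \<and> -1<Y \<and> Y<0) \<or>
    (k=4 \<and> Y=-1 \<and> -1<X \<and> X<1) \<or> (k=5 \<and> X-Y=2 \<and> -1<Y \<and> Y<0)"

lemma w6_re[simp]: "Re w6 = 1/2" and w6_im[simp]: "Im w6 = r3/2" by (simp_all add: w6_def)

lemma hv_coords:
  "XX (hex_vert 0) = 2 \<and> YY (hex_vert 0) = 0"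
  "XX (hex_vert 1) = 1 \<and> YY (hex_vert 1) = 1"
  "XX (hex_vert 2) = -1 \<and> YY (hex_vert 2) = 1"
  "XX (hex_vert 3) = -2 \<and> YY (hex_vert 3) = 0"
  "XX (hex_vert 4) = -1 \<and> YY (hex_vert 4) = -1"
  "XX (hex_vert 5) = 1 \<and> YY (hex_vert 5) = -1"
  "XX (hex_vert 6) = 2 \<and> YY (hex_vert 6) = 0"
  by (simp_all add: hv XX_def YY_def w6_2 w6_3 w6_4 w6_5 w6_6)

lemma XX_comb: "XX ((1 - u) *\<^sub>R a + u *\<^sub>R b) = (1-u) * XX a + u * XX b"
  by (simp add: XX_def algebra_simps)
lemma YY_comb: "YY ((1 - u) *\<^sub>R a + u *\<^sub>R b) = (1-u) * YY a + u * YY b"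
  by (simp add: YY_def algebra_simps)

lemma edge_EE:
  assumes "k < 6" "z \<in> edge_interior k"
  shows "EE k (XX z) (YY z)"
proof -
  obtain u where u: "0 < u" "u < 1" "z = (1 - u) *\<^sub>R hex_vert k + u *\<^sub>R hex_vert (Suc k)"
    using assms(2) unfolding edge_interior_def in_segment by blast
  have X: "XX z = (1-u) * XX (hex_vert k) + u * XX (hex_vert (Suc k))"
    and Y: "YY z = (1-u) * YY (hex_vert k) + u * YY (hex_vert (Suc k))"
    using u(3) XX_comb YY_comb by auto
  have "k = 0 \<or> k = 1 \<or> k = 2 \<or> k = 3 \<or> k = 4 \<or> k = 5" using assms(1) by auto
  then show ?thesis
  proof (elim disjE)
    assume k: "k = 0" have s: "Suc k = 1" using k by simp show ?thesis using u(1,2) X[unfolded s, unfolded k] Y[unfolded s, unfolded k] hv_coords(1,2) unfolding k EE_def by (auto simp: algebra_simps)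
  next
    assume k: "k = 1" have s: "Suc k = 2" using k by simp show ?thesis using u(1,2) X[unfolded s, unfolded k] Y[unfolded s, unfolded k] hv_coords(2,3) unfolding k EE_def by (auto simp: algebra_simps)
  next
    assume k: "k = 2" have s: "Suc k = 3" using k by simp show ?thesis using u(1,2) X[unfolded s, unfolded k] Y[unfolded s, unfolded k] hv_coords(3,4) unfolding k EE_def by (auto simp: algebra_simps)
  next
    assume k: "k = 3" have s: "Suc k = 4" using k by simp show ?thesis using u(1,2) X[unfolded s, unfolded k] Y[unfolded s, unfolded k] hv_coords(4,5) unfolding k EE_def by (auto simp: algebra_simps)
  next
    assume k: "k = 4" have s: "Suc k = 5" using k by simp show ?thesis using u(1,2) X[unfolded s, unfolded k] Y[unfolded s, unfolded k] hv_coords(5,6) unfolding k EE_def by (auto simp: algebra_simps)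
  next
    assume k: "k = 5" have s: "Suc k = 6" using k by simp show ?thesis using u(1,2) X[unfolded s, unfolded k] Y[unfolded s, unfolded k] hv_coords(6,7) unfolding k EE_def by (auto simp: algebra_simps)
  qed
qed

lemma Ld_coords:
  "L_dir 0 = Complex (r3/2) (1/2)" "L_dir 1 = Complex (-r3/2) (1/2)" "L_dir 2 = Complex 0 (-1)"
  by (simp_all add: Ld w6_2 w6_4 complex_eq_iff)

lemma hn_coords:
  "hex_normal 0 = Complex (r3/2) (1/2)" "hex_normal 1 = Complex 0 1"
  "hex_normal 2 = Complex (-r3/2) (1/2)" "hex_normal 3 = Complex (-r3/2) (-1/2)"
  "hex_normal 4 = Complex 0 (-1)" "hex_normal 5 = Complex (r3/2) (-1/2)"
  by (simp_all add: hn w6_2 w6_3 w6_4 w6_5 complex_eq_iff)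

definition H0 where "H0 z = gc ((XX z + YY z)/2)"
definition H1 where "H1 z = gc ((YY z - XX z)/2)"
definition H2 where "H2 z = gc (- YY z)"

lemma seg_len_H: "seg_len a b = \<bar>H0 b - H0 a\<bar> + \<bar>H1 b - H1 a\<bar> + \<bar>H2 b - H2 a\<bar>"
proof -
  have F: "Re (z * cnj (L_dir 0)) = (XX z + YY z)/2" "Re (z * cnj (L_dir 1)) = (YY z - XX z)/2"
     "Re (z * cnj (L_dir 2)) = - YY z" for z
    unfolding Ld_coords by (simp_all add: XX_def YY_def field_simps)
  have S: "(\<Sum>k<(3::nat). f k) = f 0 + f 1 + f 2" for f :: "nat \<Rightarrow> real"
    by (simp add: eval_nat_numeral)
  show ?thesis
    unfolding seg_len_def S proj_len_seg F H0_def H1_def H2_def by simp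
qed



lemma Hvals:
  assumes "EE k (XX z) (YY z)"
  shows "k=0 \<Longrightarrow> H0 z = 1 \<and> H1 z = 0 \<and> H2 z = 0"
    "k=1 \<Longrightarrow> H0 z = (XX z + 1)/2 \<and> H1 z = (1 - XX z)/2 \<and> H2 z = 0"
    "k=2 \<Longrightarrow> H0 z = 0 \<and> H1 z = 1 \<and> H2 z = 0"
    "k=3 \<Longrightarrow> H0 z = 0 \<and> H1 z = 1 + YY z \<and> H2 z = - YY z"
    "k=4 \<Longrightarrow> H0 z = 0 \<and> H1 z = 0 \<and> H2 z = 1"
    "k=5 \<Longrightarrow> H0 z = 1 + YY z \<and> H1 z = 0 \<and> H2 z = - YY z"
  using assms by (auto simp: EE_def H0_def H1_def H2_def gc_def max_def min_def)

lemma Hsum: "EE k (XX z) (YY z) \<Longrightarrow> H0 z + H1 z + H2 z = 1"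
proof -
  assume e: "EE k (XX z) (YY z)"
  hence "k = 0 \<or> k = 1 \<or> k = 2 \<or> k = 3 \<or> k = 4 \<or> k = 5" by (auto simp: EE_def)
  thus ?thesis using Hvals[OF e] by auto
qed

lemma SL0: "u0+u1+u2 = (1::real) \<Longrightarrow> v0+v1+v2 = 1 \<Longrightarrow> 2*\<bar>u0-v0\<bar> \<le> \<bar>u0-v0\<bar>+\<bar>u1-v1\<bar>+\<bar>u2-v2\<bar>"
  by (smt (verit))
lemma SL1: "u0+u1+u2 = (1::real) \<Longrightarrow> v0+v1+v2 = 1 \<Longrightarrow> 2*\<bar>u1-v1\<bar> \<le> \<bar>u0-v0\<bar>+\<bar>u1-v1\<bar>+\<bar>u2-v2\<bar>"
  by (smt (verit))
lemma SL2: "u0+u1+u2 = (1::real) \<Longrightarrow> v0+v1+v2 = 1 \<Longrightarrow> 2*\<bar>u2-v2\<bar> \<le> \<bar>u0-v0\<bar>+\<bar>u1-v1\<bar>+\<bar>u2-v2\<bar>"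
  by (smt (verit))

definition lin :: "nat \<Rightarrow> complex \<Rightarrow> real" where "lin k z = Re (z * cnj (hex_normal k))"

lemma lin_val: "k < 6 \<Longrightarrow> lin k z = (if k=0 then (XX z + YY z)/2 else if k=1 then YY z
   else if k=2 then (YY z - XX z)/2 else if k=3 then -(XX z + YY z)/2 else if k = 4 then - YY z
   else (XX z - YY z)/2)"
proof -
  assume "k < 6"
  hence "k = 0 \<or> k = 1 \<or> k = 2 \<or> k = 3 \<or> k = 4 \<or> k = 5" by auto
  thus ?thesis
    by (elim disjE; simp only: lin_def hn_coords; simp add: XX_def YY_def field_simps)
qed

lemma lin_EE:
  assumes "k < 6" "EE k' (XX z) (YY z)"
  shows "lin k z \<le> 1" "lin k z = 1 \<Longrightarrow> k' = k"
  using assms lin_val[OF assms(1), of z] by (auto simp: EE_def split: if_splits)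

lemma lin_own: "EE k (XX z) (YY z) \<Longrightarrow> lin k z = 1"
proof -
  assume e: "EE k (XX z) (YY z)"
  hence "k < 6" by (auto simp: EE_def)
  thus ?thesis using e lin_val[of k z] by (auto simp: EE_def)
qed

lemma lin_add: "lin k (a + complex_of_real c * w) = lin k a + c * lin k w"
  by (simp add: lin_def algebra_simps)
lemma lin_diff: "lin k (a - b) = lin k a - lin k b"
  by (simp add: lin_def algebra_simps)
lemma lin_scale: "lin k (complex_of_real c * w) = c * lin k w"
  by (simp add: lin_def algebra_simps)

lemma reflect_tangent: "lin k w = 0 \<Longrightarrow> edge_reflect k w = w"
  by (simp add: edge_reflect_def lin_def)

text \<open>Tangential functionals for the B-edges 1, 3, 5.\<close>
definition tau :: "nat \<Rightarrow> complex \<Rightarrow> real" where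
  "tau k z = (if k = 1 then XX z else if k = 3 then XX z - 3 * YY z else XX z + 3 * YY z)"

lemma tau_lin: "tau k (a + complex_of_real c * w) = tau k a + c * tau k w"
  "tau k (a - b) = tau k a - tau k b"
  by (auto simp: tau_def XX_def YY_def algebra_simps)

lemma tau_reflect:
  assumes "k = 1 \<or> k = 3 \<or> k = 5"
  shows "tau k (edge_reflect k d) = tau k d"
proof -
  have n: "tau k (hex_normal k) = 0"
    using assms by (elim disjE; simp only: hn_coords; simp add: tau_def XX_def YY_def)
  have e: "edge_reflect k d = d + complex_of_real (- (2 * Re (d * cnj (hex_normal k)))) * hex_normal k"
    by (simp only: edge_reflect_def of_real_minus mult_minus_left diff_conv_add_uminus)
  show ?thesis unfolding e tau_lin(1) n by simp
qed



lemma H0z: "XX z + YY z \<le> 0 \<Longrightarrow> H0 z = 0" by (simp add: H0_def gc_def)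
lemma H1z: "YY z - XX z \<le> 0 \<Longrightarrow> H1 z = 0" by (simp add: H1_def gc_def)
lemma H2z: "YY z \<ge> 0 \<Longrightarrow> H2 z = 0" by (simp add: H2_def gc_def)

lemma G1a: "EE k X Y \<Longrightarrow> k \<noteq> 1 \<Longrightarrow> EE 1 Xb Yb \<Longrightarrow> X \<le> Xb \<Longrightarrow> X + Y \<le> 0"
  by (auto simp: EE_def)
lemma G1b: "EE k X Y \<Longrightarrow> k \<noteq> 1 \<Longrightarrow> EE 1 Xb Yb \<Longrightarrow> Xb \<le> X \<Longrightarrow> Y - X \<le> 0"
  by (auto simp: EE_def)
lemma G3a: "EE k X Y \<Longrightarrow> k \<noteq> 3 \<Longrightarrow> EE 3 Xb Yb \<Longrightarrow> X - 3*Y \<le> Xb - 3*Yb \<Longrightarrow> Y \<ge> 0"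
  by (auto simp: EE_def)
lemma G3b: "EE k X Y \<Longrightarrow> k \<noteq> 3 \<Longrightarrow> EE 3 Xb Yb \<Longrightarrow> Xb - 3*Yb \<le> X - 3*Y \<Longrightarrow> Y - X \<le> 0"
  by (auto simp: EE_def)
lemma G5a: "EE k X Y \<Longrightarrow> k \<noteq> 5 \<Longrightarrow> EE 5 Xb Yb \<Longrightarrow> X + 3*Y \<le> Xb + 3*Yb \<Longrightarrow> X + Y \<le> 0"
  by (auto simp: EE_def)
lemma G5b: "EE k X Y \<Longrightarrow> k \<noteq> 5 \<Longrightarrow> EE 5 Xb Yb \<Longrightarrow> Xb + 3*Yb \<le> X + 3*Y \<Longrightarrow> Y \<ge> 0"
  by (auto simp: EE_def)

lemma fin: "sab \<ge> 2*\<bar>p1 - p0\<bar> \<Longrightarrow> sbc \<ge> 2*\<bar>q2 - q1\<bar> \<Longrightarrow> p0 = 0 \<Longrightarrow> q2 = 0 \<Longrightarrow>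
   p1 + q1 = (1::real) \<Longrightarrow> 2 \<le> sab + sbc"
  by (smt (verit))

lemma pair_core:
  assumes ea: "EE ka (XX a) (YY a)" and eb: "EE kb (XX b) (YY b)" and ec: "EE kc (XX c) (YY c)"
    and kb: "kb = 1 \<or> kb = 3 \<or> kb = 5" and ka: "ka \<noteq> kb" and kc: "kc \<noteq> kb"
    and S: "(tau kb a \<le> tau kb b \<and> tau kb b \<le> tau kb c) \<or> (tau kb b \<le> tau kb a \<and> tau kb c \<le> tau kb b)"
  shows "2 \<le> seg_len a b + seg_len b c"
proof -
  have sa: "H0 a + H1 a + H2 a = 1" using Hsum[OF ea] .
  have sb: "H0 b + H1 b + H2 b = 1" using Hsum[OF eb] .
  have sc: "H0 c + H1 c + H2 c = 1" using Hsum[OF ec] .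
  note sab = SL0[OF sb sa] SL1[OF sb sa] SL2[OF sb sa]
  note sbc = SL0[OF sc sb] SL1[OF sc sb] SL2[OF sc sb]
  note defs = seg_len_H
  from kb show ?thesis
  proof (elim disjE)
    assume k: "kb = 1"
    have hb: "H2 b = 0" using Hvals(2)[OF eb] k by simp
    from S show ?thesis
    proof (elim disjE conjE)
      assume "tau kb a \<le> tau kb b" "tau kb b \<le> tau kb c"
      hence "XX a \<le> XX b" "XX b \<le> XX c" using k by (auto simp: tau_def)
      hence "H0 a = 0" "H1 c = 0"
        using G1a[OF ea] G1b[OF ec] ka kc eb k H0z H1z by auto
      thus ?thesis unfolding defs
        using fin[OF sab(1) sbc(2)] sb hb by simp
    next
      assume "tau kb b \<le> tau kb a" "tau kb c \<le> tau kb b"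
      hence "XX b \<le> XX a" "XX c \<le> XX b" using k by (auto simp: tau_def)
      hence "H1 a = 0" "H0 c = 0"
        using G1b[OF ea] G1a[OF ec] ka kc eb k H0z H1z by auto
      thus ?thesis unfolding defs
        using fin[OF sab(2) sbc(1)] sb hb by simp
    qed
  next
    assume k: "kb = 3"
    have hb: "H0 b = 0" using Hvals(4)[OF eb] k by simp
    from S show ?thesis
    proof (elim disjE conjE)
      assume "tau kb a \<le> tau kb b" "tau kb b \<le> tau kb c"
      hence "XX a - 3 * YY a \<le> XX b - 3 * YY b" "XX b - 3 * YY b \<le> XX c - 3 * YY c"
        using k by (auto simp: tau_def)
      hence "H2 a = 0" "H1 c = 0"
        using G3a[OF ea] G3b[OF ec] ka kc eb k H2z H1z by auto
      thus ?thesis unfolding defs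
        using fin[OF sab(3) sbc(2)] sb hb by simp
    next
      assume "tau kb b \<le> tau kb a" "tau kb c \<le> tau kb b"
      hence "XX b - 3 * YY b \<le> XX a - 3 * YY a" "XX c - 3 * YY c \<le> XX b - 3 * YY b"
        using k by (auto simp: tau_def)
      hence "H1 a = 0" "H2 c = 0"
        using G3b[OF ea] G3a[OF ec] ka kc eb k H2z H1z by auto
      thus ?thesis unfolding defs
        using fin[OF sab(2) sbc(3)] sb hb by simp
    qed
  next
    assume k: "kb = 5"
    have hb: "H1 b = 0" using Hvals(6)[OF eb] k by simp
    from S show ?thesis
    proof (elim disjE conjE)
      assume "tau kb a \<le> tau kb b" "tau kb b \<le> tau kb c"
      hence "XX a + 3 * YY a \<le> XX b + 3 * YY b" "XX b + 3 * YY b \<le> XX c + 3 * YY c"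
        using k by (auto simp: tau_def)
      hence "H0 a = 0" "H2 c = 0"
        using G5a[OF ea] G5b[OF ec] ka kc eb k H0z H2z by auto
      thus ?thesis unfolding defs
        using fin[OF sab(1) sbc(3)] sb hb by simp
    next
      assume "tau kb b \<le> tau kb a" "tau kb c \<le> tau kb b"
      hence "XX b + 3 * YY b \<le> XX a + 3 * YY a" "XX c + 3 * YY c \<le> XX b + 3 * YY b"
        using k by (auto simp: tau_def)
      hence "H2 a = 0" "H0 c = 0"
        using G5b[OF ea] G5a[OF ec] ka kc eb k H0z H2z by auto
      thus ?thesis unfolding defs
        using fin[OF sab(3) sbc(1)] sb hb by simp
    qed
  qed
qed

lemma pair_core2:
  assumes ea: "EE ka (XX a) (YY a)" and eb: "EE kb (XX b) (YY b)"
    and kb: "kb = 1 \<or> kb = 3 \<or> kb = 5" and ka: "ka \<noteq> kb"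
    and S: "tau kb a = tau kb b"
  shows "2 \<le> seg_len a b"
proof -
  have sa: "H0 a + H1 a + H2 a = 1" using Hsum[OF ea] .
  have sb: "H0 b + H1 b + H2 b = 1" using Hsum[OF eb] .
  note sab = SL0[OF sb sa] SL1[OF sb sa] SL2[OF sb sa]
  from kb show ?thesis
  proof (elim disjE)
    assume k: "kb = 1"
    have "XX a = XX b" using S k by (simp add: tau_def)
    hence "H0 a = 0" "H1 a = 0" using G1a[OF ea] G1b[OF ea] ka eb k H0z H1z by auto
    moreover have "H2 b = 0" using Hvals(2)[OF eb] k by simp
    ultimately show ?thesis unfolding seg_len_H using sab(3) sa by simp
  next
    assume k: "kb = 3"
    have "XX a - 3 * YY a = XX b - 3 * YY b" using S k by (simp add: tau_def)
    hence "H2 a = 0" "H1 a = 0" using G3a[OF ea] G3b[OF ea] ka eb k H2z H1z by auto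
    moreover have "H0 b = 0" using Hvals(4)[OF eb] k by simp
    ultimately show ?thesis unfolding seg_len_H using sab(1) sa by simp
  next
    assume k: "kb = 5"
    have "XX a + 3 * YY a = XX b + 3 * YY b" using S k by (simp add: tau_def)
    hence "H0 a = 0" "H2 a = 0" using G5a[OF ea] G5b[OF ea] ka eb k H0z H2z by auto
    moreover have "H1 b = 0" using Hvals(6)[OF eb] k by simp
    ultimately show ?thesis unfolding seg_len_H using sab(2) sa by simp
  qed
qed



lemma AA_core:
  assumes ea: "EE ka (XX a) (YY a)" and eb: "EE kb (XX b) (YY b)" and "ka \<noteq> kb"
    and "ka = 0 \<or> ka = 2 \<or> ka = 4" "kb = 0 \<or> kb = 2 \<or> kb = 4"
  shows "seg_len a b = 2"
  using assms Hvals[OF ea] Hvals[OF eb] unfolding seg_len_H by auto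

lemma seg_sym: "seg_len a b = seg_len b a"
  unfolding seg_len_H by (simp add: abs_minus_commute)

lemma seg_nonneg: "seg_len a b \<ge> 0"
  unfolding seg_len_H by simp

locale orbit =
  fixes x :: "nat \<Rightarrow> complex" and N :: nat
  assumes per: "\<And>j. x (j + N) = x j"
    and Npos: "N > 0"
    and onb: "\<And>j. \<exists>k<6. x j \<in> edge_interior k"
    and dst: "\<And>j. x j \<noteq> x (Suc j)"
    and rfl: "\<And>j k. k < 6 \<Longrightarrow> x (Suc j) \<in> edge_interior k \<Longrightarrow>
        \<exists>c>0. x (Suc (Suc j)) - x (Suc j) = complex_of_real c * edge_reflect k (x (Suc j) - x j)"
begin

definition ed :: "nat \<Rightarrow> nat" where "ed j = (SOME k. k < 6 \<and> x j \<in> edge_interior k)"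

lemma ed_prop: "ed j < 6 \<and> x j \<in> edge_interior (ed j)"
  unfolding ed_def using onb[of j] by (rule someI_ex)

lemma EEx: "EE (ed j) (XX (x j)) (YY (x j))"
  using ed_prop edge_EE by blast

lemma ed_unique: "k < 6 \<Longrightarrow> x j \<in> edge_interior k \<Longrightarrow> ed j = k"
proof -
  assume k: "k < 6" "x j \<in> edge_interior k"
  have "EE k (XX (x j)) (YY (x j))" using edge_EE k by blast
  hence "lin k (x j) = 1" by (rule lin_own)
  thus ?thesis using lin_EE(2)[OF k(1) EEx] by simp
qed

lemma ed_per: "ed (j + N) = ed j"
  unfolding ed_def per ..

definition s :: "nat \<Rightarrow> real" where "s j = seg_len (x j) (x (Suc j))"

lemma s_per: "s (j + N) = s j"
  unfolding s_def using per[of j] per[of "Suc j"] by simp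

lemma same_edge: "ed (Suc j) \<noteq> ed j"
proof
  assume eq: "ed (Suc j) = ed j"
  define k where "k = ed j"
  have k6: "k < 6" using ed_prop k_def by blast
  define w where "w = x (Suc j) - x j"
  have w0: "w \<noteq> 0" using dst[of j] w_def by simp
  have l1: "lin k (x j) = 1" using lin_own[OF EEx[of j]] k_def by simp
  have l2: "lin k (x (Suc j)) = 1" using lin_own[OF EEx[of "Suc j"]] k_def eq by simp
  have lw: "lin k w = 0" using l1 l2 lin_diff w_def by simp
  have claim: "ed (j + m) = k \<and> (\<exists>c>0. x (Suc (j + m)) - x (j + m) = complex_of_real c * w)" for m
  proof (induction m)
    case 0
    show ?case using k_def w_def by (auto intro: exI[of _ 1])
  next
    case (Suc m)
    then obtain c where c: "c > 0" "x (Suc (j + m)) - x (j + m) = complex_of_real c * w" by blast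
    have xs: "x (Suc (j + m)) = x (j + m) + complex_of_real c * w" using c(2) by (simp add: algebra_simps)
    have "lin k (x (Suc (j + m))) = 1"
      unfolding xs lin_add lw using lin_own[OF EEx[of "j+m"]] Suc.IH by simp
    hence ek: "ed (Suc (j + m)) = k" using lin_EE(2)[OF k6 EEx] by simp
    have mem: "x (Suc (j + m)) \<in> edge_interior k" using ed_prop ek by metis
    obtain c' where c': "c' > 0" "x (Suc (Suc (j + m))) - x (Suc (j + m)) =
        complex_of_real c' * edge_reflect k (x (Suc (j + m)) - x (j + m))"
      using rfl[OF k6 mem] by blast
    have "lin k (complex_of_real c * w) = 0" using lin_scale lw by simp
    hence "edge_reflect k (complex_of_real c * w) = complex_of_real c * w" by (rule reflect_tangent)
    hence "x (Suc (Suc (j + m))) - x (Suc (j + m)) = complex_of_real (c' * c) * w"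
      using c' c(2) by simp
    moreover have "c' * c > 0" using c c' by simp
    ultimately show ?case using ek by auto
  qed
  define \<Phi> where "\<Phi> m = Re (x (j + m) * cnj w)" for m
  have inc: "\<Phi> (Suc m) - \<Phi> m > 0" for m
  proof -
    obtain c where c: "c > 0" "x (Suc (j + m)) - x (j + m) = complex_of_real c * w" using claim by blast
    have "\<Phi> (Suc m) - \<Phi> m = Re ((x (Suc (j + m)) - x (j + m)) * cnj w)"
      by (simp add: \<Phi>_def algebra_simps)
    also have "\<dots> = c * Re (w * cnj w)" using c(2) by (simp add: algebra_simps)
    also have "Re (w * cnj w) = (cmod w)^2" by (simp add: complex_mult_cnj cmod_def)
    finally show ?thesis using c(1) w0 by simp
  qed
  have "(\<Sum>m<N. \<Phi> (Suc m) - \<Phi> m) = \<Phi> N - \<Phi> 0" by (rule sum_lessThan_telescope)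
  also have "\<Phi> N = \<Phi> 0" unfolding \<Phi>_def using per[of j] by simp
  finally have "(\<Sum>m<N. \<Phi> (Suc m) - \<Phi> m) = 0" by simp
  moreover have "(\<Sum>m<N. \<Phi> (Suc m) - \<Phi> m) > 0"
    using Npos inc by (intro sum_pos) auto
  ultimately show False by simp
qed

lemma tau_zero: "tau k 0 = 0" by (simp add: tau_def XX_def YY_def)

lemma tau_step:
  assumes kb: "ed (Suc j) = 1 \<or> ed (Suc j) = 3 \<or> ed (Suc j) = 5"
  shows "\<exists>t>0. tau (ed (Suc j)) (x (Suc (Suc j))) - tau (ed (Suc j)) (x (Suc j)) =
      t * (tau (ed (Suc j)) (x (Suc j)) - tau (ed (Suc j)) (x j))"
proof -
  let ?k = "ed (Suc j)"
  obtain t where t: "t > 0" "x (Suc (Suc j)) - x (Suc j) = complex_of_real t * edge_reflect ?k (x (Suc j) - x j)"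
    using rfl ed_prop by blast
  have "tau ?k (x (Suc (Suc j))) - tau ?k (x (Suc j)) = tau ?k (x (Suc (Suc j)) - x (Suc j))"
    by (simp add: tau_lin)
  also have "\<dots> = t * tau ?k (edge_reflect ?k (x (Suc j) - x j))"
    using t(2) tau_lin(1)[of ?k 0 t] tau_zero by simp
  also have "\<dots> = t * (tau ?k (x (Suc j)) - tau ?k (x j))"
    using tau_reflect[OF kb] tau_lin(2) by simp
  finally show ?thesis using t(1) by blast
qed

lemma PL:
  assumes kb: "ed (Suc j) = 1 \<or> ed (Suc j) = 3 \<or> ed (Suc j) = 5"
  shows "2 \<le> s j + s (Suc j)"
proof -
  let ?k = "ed (Suc j)"
  obtain t where t: "t > 0" "tau ?k (x (Suc (Suc j))) - tau ?k (x (Suc j)) =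
      t * (tau ?k (x (Suc j)) - tau ?k (x j))" using tau_step[OF kb] by blast
  have S: "(tau ?k (x j) \<le> tau ?k (x (Suc j)) \<and> tau ?k (x (Suc j)) \<le> tau ?k (x (Suc (Suc j)))) \<or>
      (tau ?k (x (Suc j)) \<le> tau ?k (x j) \<and> tau ?k (x (Suc (Suc j))) \<le> tau ?k (x (Suc j)))"
  proof (cases "tau ?k (x j) \<le> tau ?k (x (Suc j))")
    case True
    hence "t * (tau ?k (x (Suc j)) - tau ?k (x j)) \<ge> 0" using t(1) by simp
    thus ?thesis using True t(2) by linarith
  next
    case False
    hence "t * (tau ?k (x (Suc j)) - tau ?k (x j)) \<le> 0" using t(1)
      by (simp add: mult_nonneg_nonpos)
    thus ?thesis using False t(2) by linarith
  qed
  have d1: "ed j \<noteq> ?k" using same_edge[of j] by simp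
  have d2: "ed (Suc (Suc j)) \<noteq> ?k" using same_edge[of "Suc j"] by simp
  show ?thesis unfolding s_def
    by (rule pair_core[OF EEx EEx EEx kb d1 d2 S])
qed

lemma PL2:
  assumes kb: "ed (Suc j) = 1 \<or> ed (Suc j) = 3 \<or> ed (Suc j) = 5"
    and bk: "x (Suc (Suc j)) = x j"
  shows "2 \<le> s j"
proof -
  let ?k = "ed (Suc j)"
  obtain t where t: "t > 0" "tau ?k (x (Suc (Suc j))) - tau ?k (x (Suc j)) =
      t * (tau ?k (x (Suc j)) - tau ?k (x j))" using tau_step[OF kb] by blast
  have "(1 + t) * (tau ?k (x j) - tau ?k (x (Suc j))) = 0"
    using t(2) bk by (simp add: algebra_simps)
  hence S: "tau ?k (x j) = tau ?k (x (Suc j))" using t(1) by simp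
  have d1: "ed j \<noteq> ?k" using same_edge[of j] by simp
  show ?thesis unfolding s_def
    by (rule pair_core2[OF EEx EEx kb d1 S])
qed

lemma AA:
  assumes "ed j = 0 \<or> ed j = 2 \<or> ed j = 4" "ed (Suc j) = 0 \<or> ed (Suc j) = 2 \<or> ed (Suc j) = 4"
  shows "s j = 2"
  unfolding s_def using AA_core[OF EEx EEx _ assms] same_edge[of j] by simp

lemma s_nonneg: "s j \<ge> 0" unfolding s_def by (rule seg_nonneg)

lemma sum_shift: "(\<Sum>i<N. s (j0 + i)) = (\<Sum>i<N. s i)"
proof (induction j0)
  case 0 show ?case by simp
next
  case (Suc j0)
  have "(\<Sum>i<Suc N. s (j0 + i)) = s (j0 + 0) + (\<Sum>i<N. s (j0 + Suc i))"
    by (rule sum.lessThan_Suc_shift)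
  moreover have "(\<Sum>i<Suc N. s (j0 + i)) = (\<Sum>i<N. s (j0 + i)) + s (j0 + N)" by simp
  moreover have "s (j0 + N) = s j0" by (rule s_per)
  ultimately have "(\<Sum>i<N. s (j0 + Suc i)) = (\<Sum>i<N. s (j0 + i))" by simp
  thus ?case using Suc.IH by simp
qed

lemma window:
  assumes "N \<ge> 4"
  shows "s j0 + s (Suc j0) + s (Suc (Suc j0)) + s (Suc (Suc (Suc j0))) \<le> (\<Sum>i<N. s i)"
proof -
  have "(\<Sum>i<4. s (j0 + i)) \<le> (\<Sum>i<N. s (j0 + i))"
    using assms by (intro sum_mono2) (auto simp: s_nonneg)
  also have "\<dots> = (\<Sum>i<N. s i)" by (rule sum_shift)
  finally show ?thesis by (simp add: eval_nat_numeral)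
qed

lemma typeA: "ed j < 6 \<Longrightarrow> \<not> (ed j = 1 \<or> ed j = 3 \<or> ed j = 5) \<Longrightarrow> ed j = 0 \<or> ed j = 2 \<or> ed j = 4"
  by auto

lemma big:
  assumes "N \<ge> 4"
  shows "4 \<le> (\<Sum>i<N. s i)"
proof -
  let ?B = "\<lambda>j. ed j = 1 \<or> ed j = 3 \<or> ed j = 5"
  have goodP: "2 \<le> s j + s (Suc j)" if nb: "\<not> (?B j \<and> \<not> ?B (Suc j) \<and> ?B (Suc (Suc j)))" for j
  proof (cases "?B (Suc j)")
    case True thus ?thesis by (rule PL)
  next
    case False
    have A1: "ed (Suc j) = 0 \<or> ed (Suc j) = 2 \<or> ed (Suc j) = 4" using False ed_prop typeA by blast
    show ?thesis
    proof (cases "?B j")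
      case False
      have "ed j = 0 \<or> ed j = 2 \<or> ed j = 4" using False ed_prop typeA by blast
      hence "s j = 2" using AA A1 by blast
      thus ?thesis using s_nonneg[of "Suc j"] by simp
    next
      case True
      hence "\<not> ?B (Suc (Suc j))" using nb False by blast
      hence "ed (Suc (Suc j)) = 0 \<or> ed (Suc (Suc j)) = 2 \<or> ed (Suc (Suc j)) = 4" using ed_prop typeA by blast
      hence "s (Suc j) = 2" using AA A1 by blast
      thus ?thesis using s_nonneg[of j] by simp
    qed
  qed
  show ?thesis
  proof (cases "\<exists>j. ?B j \<and> \<not> ?B (Suc j) \<and> ?B (Suc (Suc j))")
    case True
    then obtain j where j: "?B j" "?B (Suc (Suc j))" by blast
    define j0 where "j0 = j + N - 1"
    have e1: "Suc j0 = j + N" using Npos j0_def by simp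
    have e2: "Suc (j0 + 2) = Suc (Suc j) + N" using Npos j0_def by simp
    have "?B (Suc j0)" unfolding e1 ed_per using j(1) .
    hence p1: "2 \<le> s j0 + s (Suc j0)" by (rule PL)
    have "?B (Suc (j0 + 2))" unfolding e2 ed_per using j(2) .
    hence p2: "2 \<le> s (j0 + 2) + s (Suc (j0 + 2))" by (rule PL)
    show ?thesis using window[OF assms, of j0] p1 p2 by (simp add: eval_nat_numeral)
  next
    case False
    hence p1: "2 \<le> s 0 + s 1" and p2: "2 \<le> s 2 + s 3"
      using goodP[of 0] goodP[of 2] by (auto simp: eval_nat_numeral)
    show ?thesis using window[OF assms, of 0] p1 p2 by (simp add: eval_nat_numeral)
  qed
qed

lemma two:
  assumes "N = 2"
  shows "4 \<le> (\<Sum>i<N. s i)"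
proof -
  have sum: "(\<Sum>i<N. s i) = s 0 + s 1" using assms by (simp add: eval_nat_numeral)
  have x2: "x (Suc (Suc 0)) = x 0" using per[of 0] assms by (simp add: eval_nat_numeral)
  have x3: "x (Suc (Suc 1)) = x 1" using per[of 1] assms by (simp add: eval_nat_numeral)
  have sym: "s 1 = s 0" unfolding s_def using x2 seg_sym by (simp add: eval_nat_numeral)
  show ?thesis
  proof (cases "ed 1 = 1 \<or> ed 1 = 3 \<or> ed 1 = 5")
    case True
    hence "2 \<le> s 0" using PL2[of 0] x2 by (simp add: eval_nat_numeral)
    thus ?thesis using sum sym by simp
  next
    case F1: False
    show ?thesis
    proof (cases "ed 0 = 1 \<or> ed 0 = 3 \<or> ed 0 = 5")
      case True
      have "ed (Suc 1) = ed 0" using x2 unfolding ed_def by (simp add: eval_nat_numeral)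
      hence "2 \<le> s 1" using PL2[of 1] x3 True by (simp add: eval_nat_numeral)
      thus ?thesis using sum sym by simp
    next
      case False
      have "ed 0 = 0 \<or> ed 0 = 2 \<or> ed 0 = 4" using False ed_prop typeA by blast
      moreover have "ed (Suc 0) = 0 \<or> ed (Suc 0) = 2 \<or> ed (Suc 0) = 4" using F1 ed_prop typeA by simp
      ultimately have "s 0 = 2" using AA by blast
      thus ?thesis using sum sym by simp
    qed
  qed
qed

end



lemma main_lower:
  assumes R: "restricted_closed_geodesic xs"
  shows "geodesic_length xs \<ge> 4"
proof -
  define N where "N = length xs"
  have N0: "N \<noteq> 0" and ev: "even N"
    and on: "\<forall>j<N. \<exists>k<6. xs ! j \<in> edge_interior k"
    and ds: "\<forall>j<N. xs ! j \<noteq> xs ! ((j + 1) mod N)"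
    and rf: "\<forall>j<N. \<forall>k<6. xs ! ((j + 1) mod N) \<in> edge_interior k \<longrightarrow>
          (\<exists>c>0. xs ! ((j + 2) mod N) - xs ! ((j + 1) mod N) =
                  complex_of_real c * edge_reflect k (xs ! ((j + 1) mod N) - xs ! j))"
    using R unfolding restricted_closed_geodesic_def Let_def N_def by auto
  define x where "x j = xs ! (j mod N)" for j
  have Npos: "N > 0" using N0 by simp
  have m1: "(j mod N + 1) mod N = Suc j mod N" for j by (simp add: mod_Suc_eq)
  have m2: "(j mod N + 2) mod N = Suc (Suc j) mod N" for j
    by (metis add_2_eq_Suc' mod_add_left_eq)
  interpret O: orbit x N
  proof
    show "x (j + N) = x j" for j unfolding x_def by simp
    show "N > 0" by (rule Npos)
    show "\<exists>k<6. x j \<in> edge_interior k" for j unfolding x_def using on Npos by simp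
    show "x j \<noteq> x (Suc j)" for j unfolding x_def using ds[rule_format, of "j mod N"] Npos m1 by simp
    show "\<exists>c>0. x (Suc (Suc j)) - x (Suc j) = complex_of_real c * edge_reflect k (x (Suc j) - x j)"
      if "k < 6" "x (Suc j) \<in> edge_interior k" for j k
      using rf[rule_format, of "j mod N" k] that Npos m1 m2 unfolding x_def by simp
  qed
  have "geodesic_length xs = (\<Sum>i<N. O.s i)"
    unfolding geodesic_length_def N_def[symmetric] O.s_def
  proof (rule sum.cong)
    fix i assume "i \<in> {..<N}"
    hence "i < N" by simp
    thus "seg_len (xs ! i) (xs ! ((i + 1) mod N)) = seg_len (x i) (x (Suc i))"
      unfolding x_def by simp
  qed simp
  moreover have "N = 2 \<or> N \<ge> 4"
  proof -
    have "N \<noteq> 1" "N \<noteq> 3" using ev by auto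
    thus ?thesis using N0 by linarith
  qed
  ultimately show ?thesis using O.big O.two by auto
qed

lemma mi_edge: "- \<i> \<in> edge_interior 4"
proof -
  have "hex_vert 4 \<noteq> hex_vert 5"
    by (simp add: hv w6_4 w6_5 w6_2 complex_eq_iff)
  moreover have "- \<i> = (1 - 1/2) *\<^sub>R hex_vert 4 + (1/2) *\<^sub>R hex_vert 5"
    by (simp add: hv w6_4 w6_5 w6_2 complex_eq_iff field_simps)
  moreover have e: "Suc 4 = 5" by simp
  ultimately show ?thesis unfolding edge_interior_def in_segment e
    by (intro conjI exI[of _ "1/2"]) auto
qed

lemma i_edge: "\<i> \<in> edge_interior 1"
proof -
  have "hex_vert 1 \<noteq> hex_vert 2"
    by (simp add: hv w6_2 complex_eq_iff)
  moreover have "\<i> = (1 - 1/2) *\<^sub>R hex_vert 1 + (1/2) *\<^sub>R hex_vert 2"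
    by (simp add: hv w6_2 complex_eq_iff field_simps)
  ultimately show ?thesis unfolding edge_interior_def in_segment Suc_1
    by (intro conjI exI[of _ "1/2"]) auto
qed

lemma i_unique: "k < 6 \<Longrightarrow> \<i> \<in> edge_interior k \<Longrightarrow> k = 1"
  using edge_EE[of k \<i>] by (auto simp: EE_def XX_def YY_def)

lemma mi_unique: "k < 6 \<Longrightarrow> - \<i> \<in> edge_interior k \<Longrightarrow> k = 4"
  using edge_EE[of k "- \<i>"] by (auto simp: EE_def XX_def YY_def)

lemma example_geod: "restricted_closed_geodesic [-\<i>, \<i>]"
proof -
  have r1: "edge_reflect 1 (\<i> - - \<i>) = - 2 * \<i>"
    by (simp only: edge_reflect_def hn_coords) (simp add: complex_eq_iff)
  have r4: "edge_reflect 4 (- \<i> - \<i>) = 2 * \<i>"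
    by (simp only: edge_reflect_def hn_coords) (simp add: complex_eq_iff)
  have A: "\<forall>j<2. \<exists>k<6. [-\<i>, \<i>] ! j \<in> edge_interior k"
  proof (intro allI impI)
    fix j :: nat assume "j < 2"
    hence "j = 0 \<or> j = 1" by auto
    thus "\<exists>k<6. [-\<i>, \<i>] ! j \<in> edge_interior k"
    proof
      assume "j = 0" thus ?thesis using mi_edge by (intro exI[of _ 4]) simp
    next
      assume "j = 1" thus ?thesis using i_edge by (intro exI[of _ 1]) simp
    qed
  qed
  have B: "\<forall>j<2. [-\<i>, \<i>] ! j \<noteq> [-\<i>, \<i>] ! ((j + 1) mod 2)"
  proof (intro allI impI)
    fix j :: nat assume "j < 2"
    hence "j = 0 \<or> j = 1" by auto
    thus "[-\<i>, \<i>] ! j \<noteq> [-\<i>, \<i>] ! ((j + 1) mod 2)" by (auto simp: complex_eq_iff)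
  qed
  have C: "\<forall>j<2. \<forall>k<6. [-\<i>, \<i>] ! ((j + 1) mod 2) \<in> edge_interior k \<longrightarrow>
          (\<exists>c>0. [-\<i>, \<i>] ! ((j + 2) mod 2) - [-\<i>, \<i>] ! ((j + 1) mod 2) =
                  complex_of_real c * edge_reflect k ([-\<i>, \<i>] ! ((j + 1) mod 2) - [-\<i>, \<i>] ! j))"
  proof (intro allI impI)
    fix j k :: nat assume j: "j < 2" and k: "k < 6"
      and m: "[-\<i>, \<i>] ! ((j + 1) mod 2) \<in> edge_interior k"
    from j have "j = 0 \<or> j = 1" by auto
    thus "\<exists>c>0. [-\<i>, \<i>] ! ((j + 2) mod 2) - [-\<i>, \<i>] ! ((j + 1) mod 2) =
                  complex_of_real c * edge_reflect k ([-\<i>, \<i>] ! ((j + 1) mod 2) - [-\<i>, \<i>] ! j)"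
    proof
      assume j0: "j = 0"
      hence "k = 1" using m k i_unique by simp
      thus ?thesis using j0 r1 by (intro exI[of _ 1]) (simp add: complex_eq_iff)
    next
      assume j1: "j = 1"
      hence "k = 4" using m k mi_unique by simp
      thus ?thesis using j1 r4 by (intro exI[of _ 1]) (simp add: complex_eq_iff)
    qed
  qed
  have L: "length [-\<i>, \<i>] = 2" by simp
  show ?thesis unfolding restricted_closed_geodesic_def Let_def L
    by (intro conjI A B C) simp_all
qed

lemma example_len: "geodesic_length [-\<i>, \<i>] = 4"
proof -
  have "seg_len (-\<i>) \<i> = 2" "seg_len \<i> (-\<i>) = 2"
    by (simp_all add: seg_len_H H0_def H1_def H2_def XX_def YY_def gc_def)
  thus ?thesis by (simp add: geodesic_length_def eval_nat_numeral)
qed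

theorem proposition4p2:
  shows "restricted_closed_geodesic [-\<i>, \<i>] \<and> geodesic_length [-\<i>, \<i>] = 4 \<and>
         (\<forall>xs. restricted_closed_geodesic xs \<longrightarrow> geodesic_length xs \<ge> 4)"
  using example_geod example_len main_lower by blast

end
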